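(* Let $k\ge 2$ be a constant integer. Deterministically, the random $k$-tree $G(n)$ has vertex expansion $\alpha(G(n))=\mathcal{O}(k/n)$, and with probability $1-o(1)$ as $n\to\infty$ its conductance satisfies $\Phi(G(n))=\mathcal{O}(\log n\cdot n^{-1/k})$.
   Context: Random $k$-tree process: $G(0)$ is a clique on $k$ vertices; for $t\ge1$, $G(t)$ is obtained from $G(t-1)$ by choosing a $k$-clique of $G(t-1)$ uniformly at random, creating a new vertex, and joining it to all vertices of the chosen clique. Vertex expansion: $\alpha(G)=\min\{|\partial S|/|S| : S\subseteq V(G),\ 0<|S|\le |V(G)|/2\}$, where $\partial S$ is the set of vertices outside $S$ with a neighbor in $S$. Conductance: $\Phi(G)=\min\{e(S,V(G)\setminus S)/\mathrm{vol}(S): S\subseteq V(G),\ 0<\mathrm{vol}(S)\le \mathrm{vol}(V(G))/2\}$, where $e(S,V(G)\setminus S)$ is the number of edges between $S$ and its complement and $\mathrm{vol}(S)=\sum_{u\in S}\deg(u)$. *)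

theory Defs
  imports "HOL-Probability.Probability"
begin

text \<open>Simple graphs on natural-number vertices: a vertex set V and an edge set E
  of two-element sets.\<close>

definition boundary :: "nat set \<Rightarrow> nat set set \<Rightarrow> nat set \<Rightarrow> nat set" where
  "boundary V E S = {v \<in> V - S. \<exists>u\<in>S. {u, v} \<in> E}"

definition vertex_expansion :: "nat set \<Rightarrow> nat set set \<Rightarrow> real" where
  "vertex_expansion V E =
     Min {real (card (boundary V E S)) / real (card S) | S.
            S \<subseteq> V \<and> 0 < card S \<and> real (card S) \<le> real (card V) / 2}"

definition degree :: "nat set \<Rightarrow> nat set set \<Rightarrow> nat \<Rightarrow> nat" where
  "degree V E v = card {u \<in> V. {u, v} \<in> E}"

definition vol :: "nat set \<Rightarrow> nat set set \<Rightarrow> nat set \<Rightarrow> nat" where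
  "vol V E S = (\<Sum>u\<in>S. degree V E u)"

definition cut_edges :: "nat set \<Rightarrow> nat set set \<Rightarrow> nat set \<Rightarrow> nat" where
  "cut_edges V E S = card {e \<in> E. \<exists>u\<in>S. \<exists>w\<in>V - S. e = {u, w}}"

definition conductance :: "nat set \<Rightarrow> nat set set \<Rightarrow> real" where
  "conductance V E =
     Min {real (cut_edges V E S) / real (vol V E S) | S.
            S \<subseteq> V \<and> 0 < vol V E S \<and> real (vol V E S) \<le> real (vol V E V) / 2}"

definition kcliques :: "nat \<Rightarrow> nat set \<Rightarrow> nat set set \<Rightarrow> nat set set" where
  "kcliques k V E = {C. C \<subseteq> V \<and> card C = k \<and> (\<forall>x\<in>C. \<forall>y\<in>C. x \<noteq> y \<longrightarrow> {x, y} \<in> E)}"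

text \<open>Vertex set of G(t): {0,...,k+t-1}; vertex k+t is the vertex added at step t+1.\<close>
definition ktree_vertices :: "nat \<Rightarrow> nat \<Rightarrow> nat set" where
  "ktree_vertices k t = {0..<k + t}"

fun random_ktree :: "nat \<Rightarrow> nat \<Rightarrow> nat set set pmf" where
  "random_ktree k 0 = return_pmf {{x, y} | x y. x < k \<and> y < k \<and> x \<noteq> y}"
| "random_ktree k (Suc t) =
     bind_pmf (random_ktree k t) (\<lambda>E.
       map_pmf (\<lambda>C. E \<union> {{k + t, c} | c. c \<in> C})
         (pmf_of_set (kcliques k (ktree_vertices k t) E)))"

end

theory Submission
  imports Defs "HOL-Probability.Probability"
begin

definition initE :: "nat \<Rightarrow> nat set set" where
  "initE k = {{x, y} | x y. x < k \<and> y < k \<and> x \<noteq> y}"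
definition newE :: "nat \<Rightarrow> nat \<Rightarrow> nat set \<Rightarrow> nat set set" where
  "newE k t C = {{k + t, c} | c. c \<in> C}"
definition lowN :: "nat set set \<Rightarrow> nat \<Rightarrow> nat set" where
  "lowN E v = {u. u < v \<and> {u, v} \<in> E}"

definition kinv :: "nat \<Rightarrow> nat \<Rightarrow> nat set set \<Rightarrow> bool" where
  "kinv k t E \<longleftrightarrow>
    (\<forall>e\<in>E. \<exists>a b. e = {a, b} \<and> a \<noteq> b \<and> a < k + t \<and> b < k + t) \<and>
    initE k \<subseteq> E \<and>
    (\<forall>v. k \<le> v \<and> v < k + t \<longrightarrow> card (lowN E v) = k \<and>
        (\<forall>x\<in>lowN E v. \<forall>y\<in>lowN E v. x \<noteq> y \<longrightarrow> {x, y} \<in> E)) \<and>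
    card (kcliques k (ktree_vertices k t) E) = 1 + k * t"

lemma kinvD:
  assumes "kinv k t E"
  shows "\<And>e. e \<in> E \<Longrightarrow> \<exists>a b. e = {a, b} \<and> a \<noteq> b \<and> a < k + t \<and> b < k + t"
    "initE k \<subseteq> E"
    "\<And>v. k \<le> v \<Longrightarrow> v < k + t \<Longrightarrow> card (lowN E v) = k"
    "\<And>v x y. k \<le> v \<Longrightarrow> v < k + t \<Longrightarrow> x \<in> lowN E v \<Longrightarrow> y \<in> lowN E v \<Longrightarrow> x \<noteq> y \<Longrightarrow> {x, y} \<in> E"
    "card (kcliques k (ktree_vertices k t) E) = 1 + k * t"
  using assms unfolding kinv_def by blast+

lemma kcliques_finite: "finite (kcliques k (ktree_vertices k t) E)"
proof -
  have "kcliques k (ktree_vertices k t) E \<subseteq> Pow {0..<k+t}"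
    by (auto simp: kcliques_def ktree_vertices_def)
  then show ?thesis by (rule finite_subset) simp
qed

lemma edge_lt:
  assumes "kinv k t E" "{a, b} \<in> E" shows "a < k + t" "b < k + t" "a \<noteq> b"
proof -
  from kinvD(1)[OF assms(1) assms(2)] obtain x y where "{a,b} = {x,y}" "x \<noteq> y" "x < k+t" "y < k+t"
    by blast
  then show "a < k + t" "b < k + t" "a \<noteq> b" by (auto simp: doubleton_eq_iff)
qed

lemma new_cliques:
  assumes inv: "kinv k t E" and k: "k \<ge> 1" and C: "C \<in> kcliques k (ktree_vertices k t) E"
  shows "kcliques k (ktree_vertices k (Suc t)) (E \<union> newE k t C) =
         kcliques k (ktree_vertices k t) E \<union> (\<lambda>c. insert (k+t) (C - {c})) ` C"
    (is "?L = ?R")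
proof
  have CV: "C \<subseteq> {0..<k+t}" "card C = k" and Ccl: "\<And>x y. x\<in>C \<Longrightarrow> y\<in>C \<Longrightarrow> x\<noteq>y \<Longrightarrow> {x,y}\<in>E"
    using C by (auto simp: kcliques_def ktree_vertices_def)
  have finC: "finite C" using CV(1) finite_subset by blast
  show "?R \<subseteq> ?L"
  proof
    fix Q assume "Q \<in> ?R"
    then show "Q \<in> ?L"
    proof
      assume "Q \<in> kcliques k (ktree_vertices k t) E"
      then show ?thesis by (auto simp: kcliques_def ktree_vertices_def)
    next
      assume "Q \<in> (\<lambda>c. insert (k+t) (C - {c})) ` C"
      then obtain c where c: "c \<in> C" "Q = insert (k+t) (C - {c})" by blast
      have "k + t \<notin> C" using CV by auto
      then have "card Q = k" using c CV finC k by (simp add: card_Diff_singleton)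
      moreover have "Q \<subseteq> {0..<k + Suc t}" using c CV by auto
      moreover have "\<forall>x\<in>Q. \<forall>y\<in>Q. x \<noteq> y \<longrightarrow> {x,y} \<in> E \<union> newE k t C"
      proof (intro ballI impI)
        fix x y assume xy: "x \<in> Q" "y \<in> Q" "x \<noteq> y"
        show "{x,y} \<in> E \<union> newE k t C"
        proof (cases "x = k + t")
          case True
          then have "y \<in> C" using xy c by auto
          then show ?thesis using True unfolding newE_def by blast
        next
          case False
          show ?thesis
          proof (cases "y = k + t")
            case True
            then have "x \<in> C" using xy c False by auto
            then have "{y, x} \<in> newE k t C" using True unfolding newE_def by blast
            then show ?thesis by (simp add: insert_commute)
          next
            case False2: False
            then show ?thesis using False xy c Ccl by auto
          qed
        qed
      qed
      ultimately show ?thesis by (simp add: kcliques_def ktree_vertices_def)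
    qed
  qed
next
  have CV: "C \<subseteq> {0..<k+t}" "card C = k" and Ccl: "\<And>x y. x\<in>C \<Longrightarrow> y\<in>C \<Longrightarrow> x\<noteq>y \<Longrightarrow> {x,y}\<in>E"
    using C by (auto simp: kcliques_def ktree_vertices_def)
  have finC: "finite C" using CV(1) finite_subset by blast
  show "?L \<subseteq> ?R"
  proof
    fix Q assume Q: "Q \<in> ?L"
    have QV: "Q \<subseteq> {0..<k + Suc t}" "card Q = k" and Qcl: "\<And>x y. x\<in>Q \<Longrightarrow> y\<in>Q \<Longrightarrow> x\<noteq>y \<Longrightarrow> {x,y}\<in>E \<union> newE k t C"
      using Q by (auto simp: kcliques_def ktree_vertices_def)
    show "Q \<in> ?R"
    proof (cases "k + t \<in> Q")
      case False
      have "Q \<subseteq> {0..<k+t}" using QV False by (auto simp: less_Suc_eq)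
      moreover have "{x,y} \<in> E" if "x\<in>Q" "y\<in>Q" "x\<noteq>y" for x y
      proof -
        have "{x,y} \<in> E \<union> newE k t C" using Qcl that by blast
        moreover have "{x,y} \<notin> newE k t C"
          using False that by (auto simp: newE_def doubleton_eq_iff)
        ultimately show ?thesis by blast
      qed
      ultimately show ?thesis using QV by (auto simp: kcliques_def ktree_vertices_def)
    next
      case True
      have sub: "Q - {k+t} \<subseteq> C"
      proof
        fix y assume y: "y \<in> Q - {k+t}"
        then have "{k+t, y} \<in> E \<union> newE k t C" using Qcl True by auto
        moreover have "{k+t, y} \<notin> E" using edge_lt[OF inv, of "k+t" y] by auto
        ultimately obtain c where "c \<in> C" "{k+t, y} = {k+t, c}" by (auto simp: newE_def)
        then show "y \<in> C" using y by (auto simp: doubleton_eq_iff)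
      qed
      have fQ: "finite Q" using QV(1) finite_subset by blast
      have cQ: "card (Q - {k+t}) = k - 1" using True QV fQ by (simp add: card_Diff_singleton)
      have "C - (Q - {k+t}) \<noteq> {}"
      proof
        assume "C - (Q - {k+t}) = {}"
        then have "C \<subseteq> Q - {k+t}" by blast
        then have "card C \<le> card (Q - {k+t})" using fQ by (intro card_mono) auto
        then show False using CV cQ k by simp
      qed
      then obtain c where c: "c \<in> C" "c \<notin> Q - {k+t}" by blast
      have "Q - {k+t} \<subseteq> C - {c}" using sub c by auto
      moreover have "card (C - {c}) = k - 1" using c CV finC by (simp add: card_Diff_singleton)
      ultimately have "Q - {k+t} = C - {c}" using cQ finC by (intro card_subset_eq) auto
      then have "Q = insert (k+t) (C - {c})" using True by blast
      then show ?thesis using c by blast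
    qed
  qed
qed

lemma card_new_cliques:
  assumes inv: "kinv k t E" and k: "k \<ge> 1" and C: "C \<in> kcliques k (ktree_vertices k t) E"
  shows "card (kcliques k (ktree_vertices k (Suc t)) (E \<union> newE k t C)) = 1 + k * Suc t"
proof -
  have CV: "C \<subseteq> {0..<k+t}" "card C = k"
    using C by (auto simp: kcliques_def ktree_vertices_def)
  have finC: "finite C" using CV(1) finite_subset by blast
  have disj: "kcliques k (ktree_vertices k t) E \<inter> (\<lambda>c. insert (k+t) (C - {c})) ` C = {}"
    by (auto simp: kcliques_def ktree_vertices_def)
  have inj: "inj_on (\<lambda>c. insert (k+t) (C - {c})) C"
  proof (rule inj_onI)
    fix a b assume ab: "a \<in> C" "b \<in> C" "insert (k+t) (C - {a}) = insert (k+t) (C - {b})"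
    have "k + t \<notin> C" using CV by auto
    then have "C - {a} = C - {b}" using ab(3)
      by (metis Diff_iff insertCI insert_Diff_single insert_absorb insert_ident)
    then show "a = b" using ab by blast
  qed
  have "card (kcliques k (ktree_vertices k t) E \<union> (\<lambda>c. insert (k+t) (C - {c})) ` C)
      = card (kcliques k (ktree_vertices k t) E) + card ((\<lambda>c. insert (k+t) (C - {c})) ` C)"
    using disj finC kcliques_finite by (intro card_Un_disjoint) auto
  also have "card (kcliques k (ktree_vertices k t) E) = 1 + k * t" using kinvD(5)[OF inv] .
  also have "card ((\<lambda>c. insert (k+t) (C - {c})) ` C) = k" using card_image[OF inj] CV(2) by simp
  finally show ?thesis using new_cliques[OF assms] by simp
qed

lemma kinv_step:
  assumes inv: "kinv k t E" and k: "k \<ge> 1" and C: "C \<in> kcliques k (ktree_vertices k t) E"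
  shows "kinv k (Suc t) (E \<union> newE k t C)"
proof -
  have CV: "C \<subseteq> {0..<k+t}" "card C = k" and Ccl: "\<And>x y. x\<in>C \<Longrightarrow> y\<in>C \<Longrightarrow> x\<noteq>y \<Longrightarrow> {x,y}\<in>E"
    using C by (auto simp: kcliques_def ktree_vertices_def)
  have e1: "\<forall>e\<in>E \<union> newE k t C. \<exists>a b. e = {a, b} \<and> a \<noteq> b \<and> a < k + Suc t \<and> b < k + Suc t"
  proof
    fix e assume "e \<in> E \<union> newE k t C"
    then show "\<exists>a b. e = {a, b} \<and> a \<noteq> b \<and> a < k + Suc t \<and> b < k + Suc t"
    proof
      assume "e \<in> E"
      then obtain a b where "e = {a, b} \<and> a \<noteq> b \<and> a < k + t \<and> b < k + t"
        using kinvD(1)[OF inv] by blast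
      then show ?thesis by (intro exI[of _ a] exI[of _ b]) auto
    next
      assume "e \<in> newE k t C"
      then obtain c where "c \<in> C" "e = {k+t, c}" by (auto simp: newE_def)
      then show ?thesis using CV by (intro exI[of _ "k+t"] exI[of _ c]) auto
    qed
  qed
  have low_old: "lowN (E \<union> newE k t C) v = lowN E v" if "v < k + t" for v
    using that by (auto simp: lowN_def newE_def doubleton_eq_iff)
  have low_new: "lowN (E \<union> newE k t C) (k+t) = C"
  proof -
    have "{u, k+t} \<notin> E" for u using edge_lt[OF inv, of u "k+t"] by auto
    then show ?thesis using CV by (auto simp: lowN_def newE_def doubleton_eq_iff)
  qed
  have e3: "\<forall>v. k \<le> v \<and> v < k + Suc t \<longrightarrow> card (lowN (E \<union> newE k t C) v) = k \<and>
        (\<forall>x\<in>lowN (E \<union> newE k t C) v. \<forall>y\<in>lowN (E \<union> newE k t C) v. x \<noteq> y \<longrightarrow> {x, y} \<in> E \<union> newE k t C)"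
  proof (intro allI impI)
    fix v assume v: "k \<le> v \<and> v < k + Suc t"
    show "card (lowN (E \<union> newE k t C) v) = k \<and>
        (\<forall>x\<in>lowN (E \<union> newE k t C) v. \<forall>y\<in>lowN (E \<union> newE k t C) v. x \<noteq> y \<longrightarrow> {x, y} \<in> E \<union> newE k t C)"
    proof (cases "v = k + t")
      case True then show ?thesis using low_new CV Ccl by auto
    next
      case False
      then have "v < k + t" using v by auto
      then show ?thesis using low_old[of v] kinvD(3,4)[OF inv, of v] v by auto
    qed
  qed
  have ini: "initE k \<subseteq> E \<union> newE k t C" using kinvD(2)[OF inv] by blast
  show ?thesis unfolding kinv_def using e1 e3 ini card_new_cliques[OF assms] by blast
qed

lemma init_clique: "kcliques k (ktree_vertices k 0) (initE k) = {{0..<k}}"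
proof
  show "kcliques k (ktree_vertices k 0) (initE k) \<subseteq> {{0..<k}}"
  proof
    fix Q assume "Q \<in> kcliques k (ktree_vertices k 0) (initE k)"
    then have "Q \<subseteq> {0..<k}" "card Q = k" unfolding kcliques_def ktree_vertices_def by simp_all
    then have "Q = {0..<k}" by (intro card_subset_eq) auto
    then show "Q \<in> {{0..<k}}" by simp
  qed
  have "{x, y} \<in> initE k" if "x \<in> {0..<k}" "y \<in> {0..<k}" "x \<noteq> y" for x y
    using that unfolding initE_def by (intro CollectI exI[of _ x] exI[of _ y]) simp
  then have "{0..<k} \<in> kcliques k (ktree_vertices k 0) (initE k)"
    unfolding kcliques_def ktree_vertices_def by simp
  then show "{{0..<k}} \<subseteq> kcliques k (ktree_vertices k 0) (initE k)" by simp
qed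

lemma kinv_0: "kinv k 0 (initE k)"
proof -
  have e1: "\<forall>e\<in>initE k. \<exists>a b. e = {a, b} \<and> a \<noteq> b \<and> a < k + 0 \<and> b < k + 0"
    by (auto simp: initE_def)
  have e3: "\<forall>v. k \<le> v \<and> v < k + 0 \<longrightarrow> card (lowN (initE k) v) = k \<and>
        (\<forall>x\<in>lowN (initE k) v. \<forall>y\<in>lowN (initE k) v. x \<noteq> y \<longrightarrow> {x, y} \<in> initE k)"
    by simp
  have c: "card (kcliques k (ktree_vertices k 0) (initE k)) = 1 + k * 0"
    unfolding init_clique by simp
  show ?thesis unfolding kinv_def using e1 e3 c by blast
qed

lemma random_ktree_Suc':
  "random_ktree k (Suc t) = bind_pmf (random_ktree k t) (\<lambda>E.
       map_pmf (\<lambda>C. E \<union> newE k t C) (pmf_of_set (kcliques k (ktree_vertices k t) E)))"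
  by (simp add: newE_def)

lemma set_step:
  assumes "kinv k t E"
  shows "set_pmf (map_pmf (\<lambda>C. E \<union> newE k t C) (pmf_of_set (kcliques k (ktree_vertices k t) E)))
         = (\<lambda>C. E \<union> newE k t C) ` kcliques k (ktree_vertices k t) E"
proof -
  have ne: "kcliques k (ktree_vertices k t) E \<noteq> {}"
    using kinvD(5)[OF assms] by auto
  show ?thesis by (simp only: set_map_pmf set_pmf_of_set[OF ne kcliques_finite])
qed

lemma support_kinv:
  assumes "k \<ge> 1"
  shows "E \<in> set_pmf (random_ktree k t) \<Longrightarrow> kinv k t E"
proof (induction t arbitrary: E)
  case 0
  then show ?case using kinv_0[of k] by (simp add: initE_def)
next
  case (Suc t)
  have "E \<in> (\<Union>E0\<in>set_pmf (random_ktree k t). set_pmf (map_pmf (\<lambda>C. E0 \<union> newE k t C) (pmf_of_set (kcliques k (ktree_vertices k t) E0))))"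
    using Suc.prems unfolding random_ktree_Suc' set_bind_pmf .
  then obtain E0 where E0: "E0 \<in> set_pmf (random_ktree k t)"
    and E: "E \<in> set_pmf (map_pmf (\<lambda>C. E0 \<union> newE k t C) (pmf_of_set (kcliques k (ktree_vertices k t) E0)))"
    by (rule UN_E)
  have inv: "kinv k t E0" using Suc.IH E0 by blast
  have "E \<in> (\<lambda>C. E0 \<union> newE k t C) ` kcliques k (ktree_vertices k t) E0"
    using E unfolding set_step[OF inv] .
  then obtain C where "C \<in> kcliques k (ktree_vertices k t) E0" "E = E0 \<union> newE k t C"
    by (rule imageE) simp
  then show ?case using kinv_step[OF inv assms] by simp
qed

lemma support_finite:
  assumes "k \<ge> 1" shows "finite (set_pmf (random_ktree k t))"
proof (induction t)
  case 0 then show ?case by simp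
next
  case (Suc t)
  have "set_pmf (random_ktree k (Suc t)) =
     (\<Union>E\<in>set_pmf (random_ktree k t). (\<lambda>C. E \<union> newE k t C) ` kcliques k (ktree_vertices k t) E)"
    unfolding random_ktree_Suc' set_bind_pmf
    by (rule SUP_cong[OF refl], rule set_step[OF support_kinv[OF assms]])
  then show ?case using Suc kcliques_finite by simp
qed



definition Xc :: "nat \<Rightarrow> nat \<Rightarrow> nat set set \<Rightarrow> nat \<Rightarrow> nat" where
  "Xc k t E w = card {Q \<in> kcliques k (ktree_vertices k t) E. w \<in> Q}"

definition Psi :: "nat \<Rightarrow> nat \<Rightarrow> nat set set \<Rightarrow> real" where
  "Psi k t E = (\<Sum>w\<in>{0..<k+t}. real (Xc k t E w) ^ 2)"

lemma Xc_update:
  assumes inv: "kinv k t E" and k: "k \<ge> 1" and C: "C \<in> kcliques k (ktree_vertices k t) E"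
    and w: "w < k + t"
  shows "Xc k (Suc t) (E \<union> newE k t C) w = Xc k t E w + (if w \<in> C then k - 1 else 0)"
proof -
  let ?K = "kcliques k (ktree_vertices k t) E"
  let ?g = "\<lambda>c. insert (k+t) (C - {c})"
  have CV: "C \<subseteq> {0..<k+t}" "card C = k"
    using C by (auto simp: kcliques_def ktree_vertices_def)
  have finC: "finite C" using CV(1) finite_subset by blast
  have inj: "inj_on ?g C"
  proof (rule inj_onI)
    fix a b assume ab: "a \<in> C" "b \<in> C" "?g a = ?g b"
    have "k + t \<notin> C" using CV by auto
    then have "C - {a} = C - {b}" using ab(3)
      by (metis Diff_iff insertCI insert_Diff_single insert_absorb insert_ident)
    then show "a = b" using ab by blast
  qed
  let ?Cw = "{c \<in> C. c \<noteq> w \<and> w \<in> C}"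
  have split: "{Q \<in> ?K \<union> ?g ` C. w \<in> Q} = {Q \<in> ?K. w \<in> Q} \<union> ?g ` ?Cw"
    using w CV by auto
  have disj: "{Q \<in> ?K. w \<in> Q} \<inter> ?g ` ?Cw = {}"
    by (auto simp: kcliques_def ktree_vertices_def)
  have "Xc k (Suc t) (E \<union> newE k t C) w = card ({Q \<in> ?K. w \<in> Q} \<union> ?g ` ?Cw)"
    unfolding Xc_def new_cliques[OF assms(1-3)] split ..
  also have "\<dots> = card {Q \<in> ?K. w \<in> Q} + card (?g ` ?Cw)"
    using disj finC kcliques_finite by (intro card_Un_disjoint) auto
  also have "card (?g ` ?Cw) = card ?Cw"
    using inj by (intro card_image) (auto intro: inj_on_subset)
  also have "card ?Cw = (if w \<in> C then k - 1 else 0)"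
  proof (cases "w \<in> C")
    case True
    then have "?Cw = C - {w}" by auto
    then show ?thesis using True CV finC by (simp add: card_Diff_singleton)
  next
    case False
    then have "?Cw = {}" by auto
    then show ?thesis using False by simp
  qed
  finally show ?thesis by (simp add: Xc_def)
qed

lemma Xc_new:
  assumes inv: "kinv k t E" and k: "k \<ge> 1" and C: "C \<in> kcliques k (ktree_vertices k t) E"
  shows "Xc k (Suc t) (E \<union> newE k t C) (k + t) = k"
proof -
  let ?K = "kcliques k (ktree_vertices k t) E"
  let ?g = "\<lambda>c. insert (k+t) (C - {c})"
  have CV: "C \<subseteq> {0..<k+t}" "card C = k"
    using C by (auto simp: kcliques_def ktree_vertices_def)
  have inj: "inj_on ?g C"
  proof (rule inj_onI)
    fix a b assume ab: "a \<in> C" "b \<in> C" "?g a = ?g b"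
    have "k + t \<notin> C" using CV by auto
    then have "C - {a} = C - {b}" using ab(3)
      by (metis Diff_iff insertCI insert_Diff_single insert_absorb insert_ident)
    then show "a = b" using ab by blast
  qed
  have split: "{Q \<in> ?K \<union> ?g ` C. k + t \<in> Q} = ?g ` C"
    by (auto simp: kcliques_def ktree_vertices_def)
  show ?thesis unfolding Xc_def new_cliques[OF assms] split
    using inj CV by (simp add: card_image)
qed

lemma sum_Xc: 
  assumes "finite A" "\<And>C. C \<in> A \<Longrightarrow> C \<subseteq> W" "finite W"
  shows "(\<Sum>w\<in>W. real (card {Q\<in>A. w \<in> Q}) * f w) = (\<Sum>C\<in>A. \<Sum>w\<in>C. f w)"
proof -
  have "(\<Sum>w\<in>W. real (card {Q\<in>A. w \<in> Q}) * f w) = (\<Sum>w\<in>W. \<Sum>C\<in>A. if w \<in> C then f w else 0)"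
    using assms(1) by (simp add: sum.If_cases Int_def)
  also have "\<dots> = (\<Sum>C\<in>A. \<Sum>w\<in>W. if w \<in> C then f w else 0)" by (rule sum.swap)
  also have "\<dots> = (\<Sum>C\<in>A. \<Sum>w\<in>C. f w)"
  proof (rule sum.cong[OF refl])
    fix C assume "C \<in> A"
    then have "W \<inter> C = C" using assms(2) by blast
    then show "(\<Sum>w\<in>W. if w \<in> C then f w else 0) = (\<Sum>w\<in>C. f w)"
      using assms(3) by (simp add: sum.If_cases Int_def)
  qed
  finally show ?thesis .
qed

definition Dk :: "nat \<Rightarrow> real" where "Dk k = real k * (real k - 1)^2 + (real k)^2"

lemma Psi_avg:
  assumes inv: "kinv k t E" and k: "k \<ge> 1"
  shows "(\<Sum>C\<in>kcliques k (ktree_vertices k t) E. Psi k (Suc t) (E \<union> newE k t C))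
          / real (card (kcliques k (ktree_vertices k t) E))
        = (1 + 2 * (real k - 1) / (1 + real k * real t)) * Psi k t E + Dk k"
proof -
  let ?K = "kcliques k (ktree_vertices k t) E"
  let ?N = "real (card ?K)"
  let ?X = "\<lambda>w. real (Xc k t E w)"
  have N: "?N = 1 + real k * real t" using inv by (simp add: kinv_def)
  have Npos: "?N > 0" using N by (simp add: add_pos_nonneg)
  have sub: "\<And>C. C \<in> ?K \<Longrightarrow> C \<subseteq> {0..<k+t}" by (auto simp: kcliques_def ktree_vertices_def)
  have cardC: "\<And>C. C \<in> ?K \<Longrightarrow> card C = k" by (auto simp: kcliques_def)
  have step: "Psi k (Suc t) (E \<union> newE k t C) =
       (\<Sum>w\<in>{0..<k+t}. ?X w ^ 2 + (if w \<in> C then 2 * (real k - 1) * ?X w + (real k - 1)^2 else 0)) + (real k)^2"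
    if C: "C \<in> ?K" for C
  proof -
    have "Psi k (Suc t) (E \<union> newE k t C) = (\<Sum>w\<in>insert (k+t) {0..<k+t}. real (Xc k (Suc t) (E \<union> newE k t C) w) ^ 2)"
      unfolding Psi_def by (simp add: atLeast0_lessThan_Suc)
    also have "\<dots> = (\<Sum>w\<in>{0..<k+t}. real (Xc k (Suc t) (E \<union> newE k t C) w) ^ 2) + (real k)^2"
      using Xc_new[OF inv k C] by simp
    also have "(\<Sum>w\<in>{0..<k+t}. real (Xc k (Suc t) (E \<union> newE k t C) w) ^ 2) =
       (\<Sum>w\<in>{0..<k+t}. ?X w ^ 2 + (if w \<in> C then 2 * (real k - 1) * ?X w + (real k - 1)^2 else 0))"
    proof (rule sum.cong[OF refl])
      fix w assume "w \<in> {0..<k+t}"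
      then show "real (Xc k (Suc t) (E \<union> newE k t C) w) ^ 2 =
          ?X w ^ 2 + (if w \<in> C then 2 * (real k - 1) * ?X w + (real k - 1)^2 else 0)"
        using Xc_update[OF inv k C, of w] k by (auto simp: power2_eq_square algebra_simps of_nat_diff)
    qed
    finally show ?thesis .
  qed
  have "(\<Sum>C\<in>?K. Psi k (Suc t) (E \<union> newE k t C)) =
     (\<Sum>C\<in>?K. Psi k t E + (\<Sum>w\<in>C. 2 * (real k - 1) * ?X w + (real k - 1)^2) + (real k)^2)"
  proof (rule sum.cong[OF refl])
    fix C assume C: "C \<in> ?K"
    have "(\<Sum>w\<in>{0..<k+t}. if w \<in> C then 2 * (real k - 1) * ?X w + (real k - 1)^2 else 0)
        = (\<Sum>w\<in>C. 2 * (real k - 1) * ?X w + (real k - 1)^2)"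
      using sub[OF C] by (simp add: sum.If_cases Int_absorb1)
    then show "Psi k (Suc t) (E \<union> newE k t C) =
      Psi k t E + (\<Sum>w\<in>C. 2 * (real k - 1) * ?X w + (real k - 1)^2) + (real k)^2"
      unfolding step[OF C] by (simp add: sum.distrib Psi_def)
  qed
  also have "\<dots> = ?N * Psi k t E + (\<Sum>C\<in>?K. \<Sum>w\<in>C. 2 * (real k - 1) * ?X w + (real k - 1)^2) + ?N * (real k)^2"
    by (simp add: sum.distrib)
  also have "(\<Sum>C\<in>?K. \<Sum>w\<in>C. 2 * (real k - 1) * ?X w + (real k - 1)^2)
       = (\<Sum>w\<in>{0..<k+t}. ?X w * (2 * (real k - 1) * ?X w + (real k - 1)^2))"
    using sum_Xc[OF kcliques_finite sub, where f="\<lambda>w. 2 * (real k - 1) * ?X w + (real k - 1)^2"]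
    by (simp add: Xc_def)
  also have "\<dots> = (\<Sum>w\<in>{0..<k+t}. 2 * (real k - 1) * ?X w ^ 2 + (real k - 1)^2 * (?X w * 1))"
    by (rule sum.cong) (simp_all add: power2_eq_square algebra_simps)
  also have "\<dots> = 2 * (real k - 1) * Psi k t E + (real k - 1)^2 * (\<Sum>w\<in>{0..<k+t}. ?X w * 1)"
    by (simp add: Psi_def sum.distrib sum_distrib_left)
  also have "(\<Sum>w\<in>{0..<k+t}. ?X w * 1) = (\<Sum>C\<in>?K. \<Sum>w\<in>C. 1)"
    using sum_Xc[OF kcliques_finite sub, where f="\<lambda>w. 1"] by (simp add: Xc_def)
  also have "\<dots> = real k * ?N" using cardC by simp
  finally have "(\<Sum>C\<in>?K. Psi k (Suc t) (E \<union> newE k t C)) =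
     ?N * Psi k t E + (2 * (real k - 1) * Psi k t E + (real k - 1)\<^sup>2 * (real k * ?N)) + ?N * (real k)\<^sup>2" .
  then show ?thesis using Npos unfolding N[symmetric] Dk_def
    by (simp add: field_simps)
qed

lemma expect_Psi_Suc:
  assumes k: "k \<ge> 1"
  shows "measure_pmf.expectation (random_ktree k (Suc t)) (Psi k (Suc t)) =
     (1 + 2 * (real k - 1) / (1 + real k * real t)) *
        measure_pmf.expectation (random_ktree k t) (Psi k t) + Dk k"
proof -
  let ?p = "random_ktree k t"
  let ?A = "set_pmf ?p"
  let ?c = "1 + 2 * (real k - 1) / (1 + real k * real t)"
  have fin: "finite ?A" by (rule support_finite[OF k])
  have "measure_pmf.expectation (random_ktree k (Suc t)) (Psi k (Suc t)) =
     (\<Sum>a\<in>?A. pmf ?p a *\<^sub>R measure_pmf.expectation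
        (map_pmf (\<lambda>C. a \<union> newE k t C) (pmf_of_set (kcliques k (ktree_vertices k t) a))) (Psi k (Suc t)))"
    unfolding random_ktree_Suc'
  proof (rule pmf_expectation_bind)
    fix x assume x: "x \<in> ?A"
    show "finite (set_pmf (map_pmf (\<lambda>C. x \<union> newE k t C) (pmf_of_set (kcliques k (ktree_vertices k t) x))))"
      unfolding set_step[OF support_kinv[OF k x]] using kcliques_finite by simp
  qed (use fin in auto)
  also have "\<dots> = (\<Sum>a\<in>?A. pmf ?p a * (?c * Psi k t a + Dk k))"
  proof (rule sum.cong[OF refl])
    fix a assume a: "a \<in> ?A"
    have inv: "kinv k t a" using support_kinv[OF k a] .
    have ne: "kcliques k (ktree_vertices k t) a \<noteq> {}" using inv by (auto simp: kinv_def)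
    show "pmf ?p a *\<^sub>R measure_pmf.expectation
        (map_pmf (\<lambda>C. a \<union> newE k t C) (pmf_of_set (kcliques k (ktree_vertices k t) a))) (Psi k (Suc t))
       = pmf ?p a * (?c * Psi k t a + Dk k)"
      using Psi_avg[OF inv k] ne kcliques_finite by (simp add: integral_pmf_of_set)
  qed
  also have "\<dots> = (\<Sum>a\<in>?A. ?c * (Psi k t a * pmf ?p a) + Dk k * pmf ?p a)"
    by (rule sum.cong) (simp_all add: algebra_simps)
  also have "\<dots> = ?c * (\<Sum>a\<in>?A. Psi k t a * pmf ?p a) + Dk k * (\<Sum>a\<in>?A. pmf ?p a)"
    by (simp only: sum.distrib sum_distrib_left)
  also have "(\<Sum>a\<in>?A. pmf ?p a) = 1" using fin by (rule sum_pmf_eq_1) simp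
  also have "(\<Sum>a\<in>?A. Psi k t a * pmf ?p a) = measure_pmf.expectation ?p (Psi k t)"
    by (rule integral_measure_pmf_real[symmetric]) (use fin in auto)
  finally show ?thesis by simp
qed

lemma expect_Psi_0: "measure_pmf.expectation (random_ktree k 0) (Psi k 0) = real k"
proof -
  have "Xc k 0 (initE k) w = 1" if "w < k" for w
  proof -
    have "{Q \<in> kcliques k (ktree_vertices k 0) (initE k). w \<in> Q} = {{0..<k}}"
      unfolding init_clique using that by auto
    then show ?thesis unfolding Xc_def by simp
  qed
  then have "Psi k 0 (initE k) = real k" by (simp add: Psi_def)
  moreover have "random_ktree k 0 = return_pmf (initE k)" by (simp add: initE_def)
  ultimately show ?thesis by simp
qed



definition par :: "nat set set \<Rightarrow> nat \<Rightarrow> nat" where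
  "par E v = Max (lowN E v)"

inductive_set desc :: "nat set set \<Rightarrow> nat \<Rightarrow> nat \<Rightarrow> nat \<Rightarrow> nat set"
  for E :: "nat set set" and k N x :: nat where
  self: "x \<in> desc E k N x"
| step: "y \<in> desc E k N x \<Longrightarrow> k \<le> z \<Longrightarrow> z < N \<Longrightarrow> par E z = y \<Longrightarrow> z \<in> desc E k N x"

lemma greedy:
  fixes a :: "nat \<Rightarrow> real"
  assumes "finite I" "\<And>i. i \<in> I \<Longrightarrow> 0 \<le> a i \<and> a i \<le> h" "h / 2 \<le> (\<Sum>i\<in>I. a i)" "0 \<le> h"
  shows "\<exists>J\<subseteq>I. h / 2 \<le> (\<Sum>i\<in>J. a i) \<and> (\<Sum>i\<in>J. a i) \<le> h"
  using assms
proof (induction I rule: finite_induct)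
  case empty
  then show ?case by (intro exI[of _ "{}"]) auto
next
  case (insert i I)
  show ?case
  proof (cases "h / 2 \<le> (\<Sum>i\<in>I. a i)")
    case True
    then obtain J where "J \<subseteq> I" "h / 2 \<le> (\<Sum>i\<in>J. a i) \<and> (\<Sum>i\<in>J. a i) \<le> h"
      using insert by auto
    then show ?thesis by (intro exI[of _ J]) auto
  next
    case False
    show ?thesis
    proof (cases "h / 2 \<le> a i")
      case True then show ?thesis using insert by (intro exI[of _ "{i}"]) auto
    next
      case False2: False
      show ?thesis using insert False False2 by (intro exI[of _ "insert i I"]) auto
    qed
  qed
qed


context
  fixes k t E N
  assumes inv: "kinv k t E" and k2: "k \<ge> 2" and N: "N = k + t"
begin

lemma lowN_props:
  assumes "k \<le> v" "v < N"
  shows "finite (lowN E v)" "card (lowN E v) = k"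
    "\<And>x y. x \<in> lowN E v \<Longrightarrow> y \<in> lowN E v \<Longrightarrow> x \<noteq> y \<Longrightarrow> {x, y} \<in> E"
proof -
  show "finite (lowN E v)" by (rule finite_subset[of _ "{..<v}"]) (auto simp: lowN_def)
  show "card (lowN E v) = k" "\<And>x y. x \<in> lowN E v \<Longrightarrow> y \<in> lowN E v \<Longrightarrow> x \<noteq> y \<Longrightarrow> {x, y} \<in> E"
    using inv assms N unfolding kinv_def by blast+
qed

lemma par_mem: assumes "k \<le> v" "v < N" shows "par E v \<in> lowN E v"
proof -
  have "lowN E v \<noteq> {}" using lowN_props[OF assms] k2 by auto
  then show ?thesis unfolding par_def using lowN_props(1)[OF assms] by (rule Max_in[rotated])
qed

lemma par_lt: assumes "k \<le> v" "v < N" shows "par E v < v"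
  using par_mem[OF assms] by (simp add: lowN_def)

lemma lowN_le_par: assumes "k \<le> v" "v < N" "u \<in> lowN E v" shows "u \<le> par E v"
  unfolding par_def using lowN_props(1)[OF assms(1,2)] assms(3) by simp

lemma lowN_sub_par:
  assumes "k \<le> v" "v < N" "k \<le> par E v"
  shows "lowN E v \<subseteq> insert (par E v) (lowN E (par E v))"
proof
  fix u assume u: "u \<in> lowN E v"
  show "u \<in> insert (par E v) (lowN E (par E v))"
  proof (cases "u = par E v")
    case False
    have "u < par E v" using lowN_le_par[OF assms(1,2) u] False by simp
    moreover have "{u, par E v} \<in> E" using lowN_props(3)[OF assms(1,2) u par_mem[OF assms(1,2)]] False .
    ultimately show ?thesis by (simp add: lowN_def)
  qed simp
qed

lemma lowN_root:
  assumes "k \<le> v" "v < N" "par E v < k"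
  shows "lowN E v \<subseteq> {0..<k}"
  using lowN_le_par[OF assms(1,2)] assms(3) by fastforce

lemma desc_bounds: "y \<in> desc E k N x \<Longrightarrow> x \<le> y \<and> (y = x \<or> (k \<le> y \<and> y < N))"
proof (induction rule: desc.induct)
  case self then show ?case by simp
next
  case (step y z)
  then show ?case using par_lt[of z] by auto
qed

lemma desc_sub: "k \<le> x \<Longrightarrow> x < N \<Longrightarrow> desc E k N x \<subseteq> {k..<N}"
  using desc_bounds by fastforce

lemma desc_finite: "finite (desc E k N x)"
  by (rule finite_subset[of _ "insert x {..<N}"]) (use desc_bounds in auto)

lemma desc_low_bdry:
  assumes "y \<in> desc E k N x" "k \<le> x" "x < N"
  shows "z \<in> lowN E y \<Longrightarrow> z \<notin> desc E k N x \<Longrightarrow> z \<in> lowN E x"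
  using assms(1)
proof (induction arbitrary: z rule: desc.induct)
  case self then show ?case by simp
next
  case (step y' z')
  have "k \<le> y'" using desc_bounds[OF step.hyps(1)] assms by auto
  then have "z \<in> insert y' (lowN E y')"
    using lowN_sub_par[OF step.hyps(2,3)] step by auto
  moreover have "z \<noteq> y'" using step by auto
  ultimately show ?case using step.IH step.prems by auto
qed

lemma desc_up:
  assumes "k \<le> x" "x < N" "y \<in> desc E k N x"
  shows "z < N \<Longrightarrow> y \<in> lowN E z \<Longrightarrow> z \<in> desc E k N x"
proof (induction z rule: less_induct)
  case (less z)
  have yz: "y < z" using less.prems by (simp add: lowN_def)
  have "x \<le> y" using desc_bounds[OF assms(3)] by simp
  then have kz: "k \<le> z" using yz assms by simp
  have yp: "y \<le> par E z" using lowN_le_par[OF kz less.prems(1) less.prems(2)] .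
  show ?case
  proof (cases "par E z = y")
    case True then show ?thesis using desc.step[OF assms(3) kz less.prems(1)] by simp
  next
    case False
    then have "k \<le> par E z" using yp \<open>x \<le> y\<close> assms by simp
    then have "y \<in> lowN E (par E z)"
      using lowN_sub_par[OF kz less.prems(1)] less.prems False by auto
    moreover have "par E z < z" using par_lt[OF kz less.prems(1)] .
    ultimately have "par E z \<in> desc E k N x" using less.IH less.prems by auto
    then show ?thesis using desc.step[OF _ kz less.prems(1)] by simp
  qed
qed

lemma desc_bdry:
  assumes "k \<le> x" "x < N" "y \<in> desc E k N x" "z \<notin> desc E k N x" "{y, z} \<in> E"
  shows "z \<in> lowN E x"
proof -
  have lt: "y < N" "z < N" "y \<noteq> z" using edge_lt[OF inv assms(5)] N by auto
  show ?thesis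
  proof (cases "z < y")
    case True
    then have "z \<in> lowN E y" using assms(5) by (simp add: lowN_def insert_commute)
    then show ?thesis using desc_low_bdry[OF assms(3,1,2)] assms(4) by blast
  next
    case False
    then have "y \<in> lowN E z" using assms(5) lt by (simp add: lowN_def)
    then have "z \<in> desc E k N x" using desc_up[OF assms(1-3) lt(2)] by blast
    then show ?thesis using assms(4) by blast
  qed
qed

lemma desc_anc:
  "y \<in> desc E k N b \<Longrightarrow> y \<in> desc E k N a \<Longrightarrow> a \<le> b \<Longrightarrow> b \<in> desc E k N a"
proof (induction rule: desc.induct)
  case self then show ?case by simp
next
  case (step y z)
  show ?case
  proof (cases "z = a")
    case True
    then have "a \<in> desc E k N b" using step desc.step by blast
    then have "b \<le> a" using desc_bounds by blast
    then show ?thesis using step True by (simp add: desc.self)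
  next
    case False
    from step.prems(1) have "par E z \<in> desc E k N a"
      by cases (use False step in auto)
    then show ?thesis using step by auto
  qed
qed

lemma desc_trans: "y \<in> desc E k N a \<Longrightarrow> a \<in> desc E k N x \<Longrightarrow> y \<in> desc E k N x"
  by (induction rule: desc.induct) (auto intro: desc.step)

definition ch :: "nat \<Rightarrow> nat set" where "ch x = {c. k \<le> c \<and> c < N \<and> par E c = x}"
definition rch :: "nat set" where "rch = {c. k \<le> c \<and> c < N \<and> par E c < k}"

lemma ch_desc_sub: "c \<in> ch x \<Longrightarrow> desc E k N c \<subseteq> desc E k N x"
proof
  fix y assume c: "c \<in> ch x" and y: "y \<in> desc E k N c"
  have "c \<in> desc E k N x" using c desc.step[OF desc.self] by (auto simp: ch_def)
  then show "y \<in> desc E k N x" using desc_trans[OF y] by blast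
qed

lemma ch_cover: "y \<in> desc E k N x \<Longrightarrow> y \<noteq> x \<Longrightarrow> \<exists>c\<in>ch x. y \<in> desc E k N c"
proof (induction rule: desc.induct)
  case self then show ?case by simp
next
  case (step y z)
  show ?case
  proof (cases "y = x")
    case True then show ?thesis using step by (auto simp: ch_def intro: desc.self)
  next
    case False
    then obtain c where "c \<in> ch x" "y \<in> desc E k N c" using step by blast
    then show ?thesis using step by (auto intro: desc.step)
  qed
qed

lemma ch_disj: "c \<in> ch x \<Longrightarrow> c' \<in> ch x \<Longrightarrow> c \<noteq> c' \<Longrightarrow> desc E k N c \<inter> desc E k N c' = {}"
proof (rule ccontr)
  have *: "False" if "c \<in> ch x" "c' \<in> ch x" "c < c'" "y \<in> desc E k N c" "y \<in> desc E k N c'" for c c' y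
  proof -
    have "c' \<in> desc E k N c" using desc_anc[OF that(5,4)] that(3) by simp
    then have "par E c' \<in> desc E k N c" by cases (use that in auto)
    then have "c \<le> x" using that desc_bounds by (auto simp: ch_def)
    moreover have "x < c" using that par_lt[of c] by (auto simp: ch_def)
    ultimately show False by simp
  qed
  assume "c \<in> ch x" "c' \<in> ch x" "c \<noteq> c'" "desc E k N c \<inter> desc E k N c' \<noteq> {}"
  then show False using *[of c c'] *[of c' c] by (cases "c < c'") auto
qed

lemma rch_disj: "c \<in> rch \<Longrightarrow> c' \<in> rch \<Longrightarrow> c \<noteq> c' \<Longrightarrow> desc E k N c \<inter> desc E k N c' = {}"
proof (rule ccontr)
  have *: "False" if "c \<in> rch" "c' \<in> rch" "c < c'" "y \<in> desc E k N c" "y \<in> desc E k N c'" for c c' y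
  proof -
    have "c' \<in> desc E k N c" using desc_anc[OF that(5,4)] that(3) by simp
    then have "par E c' \<in> desc E k N c" by cases (use that in auto)
    then have "c \<le> par E c'" using desc_bounds by auto
    then show False using that by (auto simp: rch_def)
  qed
  assume "c \<in> rch" "c' \<in> rch" "c \<noteq> c'" "desc E k N c \<inter> desc E k N c' \<noteq> {}"
  then show False using *[of c c'] *[of c' c] by (cases "c < c'") auto
qed

lemma rch_cover: "(\<Union>c\<in>rch. desc E k N c) = {k..<N}"
proof
  show "(\<Union>c\<in>rch. desc E k N c) \<subseteq> {k..<N}" using desc_sub by (auto simp: rch_def)
  show "{k..<N} \<subseteq> (\<Union>c\<in>rch. desc E k N c)"
  proof
    fix y assume "y \<in> {k..<N}"
    then show "y \<in> (\<Union>c\<in>rch. desc E k N c)"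
    proof (induction y rule: less_induct)
      case (less y)
      show ?case
      proof (cases "par E y < k")
        case True then show ?thesis using less.prems by (auto simp: rch_def intro: desc.self)
      next
        case False
        have "par E y < y" using par_lt less.prems by auto
        then have "par E y \<in> (\<Union>c\<in>rch. desc E k N c)" using less False by auto
        then show ?thesis using less.prems by (auto intro: desc.step)
      qed
    qed
  qed
qed

lemma desc_split: "desc E k N x = insert x (\<Union>c\<in>ch x. desc E k N c)" "x \<notin> (\<Union>c\<in>ch x. desc E k N c)"
proof -
  show "desc E k N x = insert x (\<Union>c\<in>ch x. desc E k N c)"
    using ch_desc_sub ch_cover by (blast intro: desc.self)
  show "x \<notin> (\<Union>c\<in>ch x. desc E k N c)"
  proof
    assume "x \<in> (\<Union>c\<in>ch x. desc E k N c)"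
    then obtain c where "c \<in> ch x" "x \<in> desc E k N c" by blast
    then show False using desc_bounds par_lt[of c] by (force simp: ch_def)
  qed
qed

lemma ch_finite: "finite (ch x)" by (rule finite_subset[of _ "{..<N}"]) (auto simp: ch_def)
lemma rch_finite: "finite rch" by (rule finite_subset[of _ "{..<N}"]) (auto simp: rch_def)

lemma sum_union_desc:
  assumes "J \<subseteq> ch x"
  shows "(\<Sum>y\<in>(\<Union>c\<in>J. desc E k N c). f y) = (\<Sum>c\<in>J. \<Sum>y\<in>desc E k N c. f y)"
proof (rule sum.UNION_disjoint)
  show "finite J" using assms ch_finite finite_subset by blast
  show "\<forall>i\<in>J. finite (desc E k N i)" using desc_finite by blast
  show "\<forall>i\<in>J. \<forall>j\<in>J. i \<noteq> j \<longrightarrow> desc E k N i \<inter> desc E k N j = {}"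
    using assms ch_disj by blast
qed

lemma sum_union_rdesc:
  assumes "J \<subseteq> rch"
  shows "(\<Sum>y\<in>(\<Union>c\<in>J. desc E k N c). f y) = (\<Sum>c\<in>J. \<Sum>y\<in>desc E k N c. f y)"
proof (rule sum.UNION_disjoint)
  show "finite J" using assms rch_finite finite_subset by blast
  show "\<forall>i\<in>J. finite (desc E k N i)" using desc_finite by blast
  show "\<forall>i\<in>J. \<forall>j\<in>J. i \<noteq> j \<longrightarrow> desc E k N i \<inter> desc E k N j = {}"
    using assms rch_disj by blast
qed


lemma centroid:
  fixes f :: "nat \<Rightarrow> real" and W :: real
  assumes f0: "\<And>x. 0 \<le> f x" and fW: "\<And>x. k \<le> x \<Longrightarrow> x < N \<Longrightarrow> f x \<le> W / 4"
    and tot: "W / 2 \<le> (\<Sum>y\<in>{k..<N}. f y)" and W0: "0 \<le> W"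
  shows "\<exists>S B. S \<subseteq> {k..<N} \<and> W / 4 \<le> (\<Sum>y\<in>S. f y) \<and> (\<Sum>y\<in>S. f y) \<le> W / 2 \<and>
           finite B \<and> card B \<le> k + 1 \<and> (\<forall>y\<in>S. \<forall>z. z \<notin> S \<longrightarrow> {y, z} \<in> E \<longrightarrow> z \<in> B)"
proof -
  define Cand where "Cand = {x. k \<le> x \<and> x < N \<and> W / 2 \<le> (\<Sum>y\<in>desc E k N x. f y)}"
  have a0: "\<And>c. 0 \<le> (\<Sum>y\<in>desc E k N c. f y)" using f0 by (simp add: sum_nonneg)
  show ?thesis
  proof (cases "Cand = {}")
    case False
    have finC: "finite Cand" by (rule finite_subset[of _ "{..<N}"]) (auto simp: Cand_def)
    define x where "x = Max Cand"
    have x: "x \<in> Cand" unfolding x_def using finC False by (rule Max_in)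
    have xk: "k \<le> x" "x < N" using x by (auto simp: Cand_def)
    have small: "(\<Sum>y\<in>desc E k N c. f y) \<le> W / 2" if c: "c \<in> ch x" for c
    proof (rule ccontr)
      assume "\<not> ?thesis"
      then have "c \<in> Cand" using c by (auto simp: Cand_def ch_def)
      then have "c \<le> x" unfolding x_def using finC by simp
      moreover have "x < c" using c par_lt[of c] by (auto simp: ch_def)
      ultimately show False by simp
    qed
    have split: "(\<Sum>y\<in>desc E k N x. f y) = f x + (\<Sum>c\<in>ch x. \<Sum>y\<in>desc E k N c. f y)"
    proof -
      have fin: "finite (\<Union>c\<in>ch x. desc E k N c)" using ch_finite desc_finite by blast
      have "(\<Sum>y\<in>desc E k N x. f y) = f x + (\<Sum>y\<in>(\<Union>c\<in>ch x. desc E k N c). f y)"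
        unfolding desc_split(1)[of x] using desc_split(2)[of x] fin by (simp add: sum.insert)
      also have "(\<Sum>y\<in>(\<Union>c\<in>ch x. desc E k N c). f y) = (\<Sum>c\<in>ch x. \<Sum>y\<in>desc E k N c. f y)"
        by (rule sum_union_desc) (rule order_refl)
      finally show ?thesis .
    qed
    have "(W / 2) / 2 \<le> (\<Sum>c\<in>ch x. \<Sum>y\<in>desc E k N c. f y)"
      using split x fW[OF xk] by (simp add: Cand_def)
    then obtain J where J: "J \<subseteq> ch x" "(W / 2) / 2 \<le> (\<Sum>c\<in>J. \<Sum>y\<in>desc E k N c. f y)"
        "(\<Sum>c\<in>J. \<Sum>y\<in>desc E k N c. f y) \<le> W / 2"
      using greedy[of "ch x" "\<lambda>c. \<Sum>y\<in>desc E k N c. f y" "W / 2"] ch_finite a0 small W0 by auto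
    define S where "S = (\<Union>c\<in>J. desc E k N c)"
    have wS: "(\<Sum>y\<in>S. f y) = (\<Sum>c\<in>J. \<Sum>y\<in>desc E k N c. f y)"
      unfolding S_def by (rule sum_union_desc[OF J(1)])
    have Ssub: "S \<subseteq> {k..<N}" unfolding S_def using J(1) desc_sub by (force simp: ch_def)
    have B: "finite (insert x (lowN E x))" "card (insert x (lowN E x)) \<le> k + 1"
      using lowN_props[OF xk] by (auto simp: card_insert_if)
    have bd: "\<forall>y\<in>S. \<forall>z. z \<notin> S \<longrightarrow> {y, z} \<in> E \<longrightarrow> z \<in> insert x (lowN E x)"
    proof (intro ballI allI impI)
      fix y z assume y: "y \<in> S" and z: "z \<notin> S" and e: "{y, z} \<in> E"
      obtain c where c: "c \<in> J" "y \<in> desc E k N c" using y by (auto simp: S_def)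
      have cc: "k \<le> c" "c < N" "par E c = x" using c J(1) by (auto simp: ch_def)
      have "z \<notin> desc E k N c" using z c by (auto simp: S_def)
      then have "z \<in> lowN E c" using desc_bdry[OF cc(1,2) c(2) _ e] by blast
      then show "z \<in> insert x (lowN E x)" using lowN_sub_par[OF cc(1,2)] cc xk by auto
    qed
    show ?thesis using Ssub J wS B bd by (intro exI[of _ S] exI[of _ "insert x (lowN E x)"]) auto
  next
    case True
    have small: "(\<Sum>y\<in>desc E k N c. f y) \<le> W / 2" if c: "c \<in> rch" for c
    proof (rule ccontr)
      assume "\<not> ?thesis"
      then have "c \<in> Cand" using c by (auto simp: Cand_def rch_def)
      then show False using True by simp
    qed
    have "(\<Sum>y\<in>{k..<N}. f y) = (\<Sum>c\<in>rch. \<Sum>y\<in>desc E k N c. f y)"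
      unfolding rch_cover[symmetric] by (rule sum_union_rdesc) simp
    then have "(W / 2) / 2 \<le> (\<Sum>c\<in>rch. \<Sum>y\<in>desc E k N c. f y)" using tot W0 by simp
    then obtain J where J: "J \<subseteq> rch" "(W / 2) / 2 \<le> (\<Sum>c\<in>J. \<Sum>y\<in>desc E k N c. f y)"
        "(\<Sum>c\<in>J. \<Sum>y\<in>desc E k N c. f y) \<le> W / 2"
      using greedy[of "rch" "\<lambda>c. \<Sum>y\<in>desc E k N c. f y" "W / 2"] rch_finite a0 small W0 by auto
    define S where "S = (\<Union>c\<in>J. desc E k N c)"
    have wS: "(\<Sum>y\<in>S. f y) = (\<Sum>c\<in>J. \<Sum>y\<in>desc E k N c. f y)"
      unfolding S_def by (rule sum_union_rdesc[OF J(1)])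
    have Ssub: "S \<subseteq> {k..<N}" unfolding S_def using J(1) desc_sub by (force simp: rch_def)
    have bd: "\<forall>y\<in>S. \<forall>z. z \<notin> S \<longrightarrow> {y, z} \<in> E \<longrightarrow> z \<in> {0..<k}"
    proof (intro ballI allI impI)
      fix y z assume y: "y \<in> S" and z: "z \<notin> S" and e: "{y, z} \<in> E"
      obtain c where c: "c \<in> J" "y \<in> desc E k N c" using y by (auto simp: S_def)
      have cc: "k \<le> c" "c < N" "par E c < k" using c J(1) by (auto simp: rch_def)
      have "z \<notin> desc E k N c" using z c by (auto simp: S_def)
      then have "z \<in> lowN E c" using desc_bdry[OF cc(1,2) c(2) _ e] by blast
      then show "z \<in> {0..<k}" using lowN_root[OF cc] by auto
    qed
    show ?thesis using Ssub J wS bd by (intro exI[of _ S] exI[of _ "{0..<k}"]) auto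
  qed
qed

end




lemma bernoulli_powr:
  fixes x b :: real assumes "0 \<le> x" "1 \<le> b"
  shows "1 + b * x \<le> (1 + x) powr b"
proof -
  let ?a = "(1 + x) powr b"
  have apos: "?a > 0" using assms by simp
  have "?a powr (1/b) * 1 powr (1 - 1/b) \<le> (1/b) * ?a + (1 - 1/b) * 1"
    by (rule Youngs_inequality_0) (use assms apos in auto)
  moreover have "?a powr (1/b) = 1 + x" using assms by (simp add: powr_powr)
  ultimately have "1 + x \<le> ?a / b + 1 - 1 / b" by simp
  then have "b * (1 + x) \<le> b * (?a / b + 1 - 1 / b)" using assms by (intro mult_left_mono) auto
  moreover have "b * (?a / b + 1 - 1 / b) = ?a + b - 1" using assms by (simp add: field_simps)
  ultimately have "b * (1 + x) \<le> ?a + b - 1" by simp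
  then show ?thesis by (simp add: algebra_simps)
qed

lemma ln_one_plus_ge: fixes s :: real shows "0 < s \<Longrightarrow> 1 / (s + 1) \<le> ln ((s + 1) / s)"
proof -
  assume s: "0 < s"
  have "ln (s / (s + 1)) \<le> s / (s + 1) - 1" using ln_le_minus_one[of "s / (s + 1)"] s by simp
  moreover have "ln (s / (s + 1)) = - ln ((s + 1) / s)" using s by (simp add: ln_div)
  moreover have "s / (s + 1) - 1 = - (1 / (s + 1))" using s by (simp add: field_simps)
  ultimately show ?thesis by simp
qed

lemma seq_bound:
  fixes e :: "nat \<Rightarrow> real" and k :: nat and D :: real
  assumes k: "k \<ge> 2" and D: "D \<ge> 0" and e0: "e 0 \<le> real k"
    and eS: "\<And>t. e (Suc t) = (1 + 2 * (real k - 1) / (1 + real k * real t)) * e t + D"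
  defines "\<beta> \<equiv> 2 - 2 / real k"
  defines "A \<equiv> real k ^ 3 + real k * D"
  shows "e t \<le> A * (real t + 1 / real k) powr \<beta> * (1 + ln (real k * real t + 1))"
proof (induction t)
  have b1: "1 \<le> \<beta>" "\<beta> \<le> 2" using k by (auto simp: \<beta>_def field_simps)
  case 0
  have "(1 / real k) ^ 2 \<le> (1 / real k) powr \<beta>"
  proof -
    have "(1 / real k) powr 2 \<le> (1 / real k) powr \<beta>"
      using k b1 by (intro powr_mono') auto
    then show ?thesis using k by (simp add: powr_realpow)
  qed
  then have "real k ^ 3 * (1 / real k) ^ 2 \<le> A * (1 / real k) powr \<beta>"
    unfolding A_def using D by (intro mult_mono) auto
  moreover have "real k ^ 3 * (1 / real k) ^ 2 = real k" using k by (simp add: field_simps power2_eq_square power3_eq_cube)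
  ultimately show ?case using e0 by simp
next
  case (Suc t)
  have b1: "1 \<le> \<beta>" "\<beta> \<le> 2" using k by (auto simp: \<beta>_def field_simps)
  define s where "s = real t + 1 / real k"
  have kpos: "real k > 0" using k by simp
  have "0 < 1 / real k" using kpos by simp
  then have s: "s > 0" unfolding s_def using of_nat_0_le_iff[of t] by linarith
  have Apos: "A \<ge> 0" unfolding A_def using D by simp
  have p1: "1 + real k * real t > 0" using kpos by (simp add: add_pos_nonneg)
  have bb: "\<beta> = 2 * (real k - 1) / real k" using kpos by (simp add: \<beta>_def field_simps)
  have ss: "s = (1 + real k * real t) / real k" using kpos by (simp add: s_def field_simps)
  have fac: "1 + 2 * (real k - 1) / (1 + real k * real t) = 1 + \<beta> / s"
    unfolding bb ss using kpos p1 by simp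
  have ks: "real k * real t + 1 = real k * s" using kpos by (simp add: s_def field_simps)
  have ks1: "real k * real (Suc t) + 1 = real k * (s + 1)" using kpos by (simp add: s_def field_simps)
  define G where "G = 1 + ln (real k * s)"
  have G0: "G \<ge> 0"
  proof -
    have "real k * s \<ge> 1" using ks by (metis le_add_same_cancel2 of_nat_0_le_iff mult_nonneg_nonneg)
    then show ?thesis unfolding G_def by simp
  qed
  have G1: "1 + ln (real k * (s + 1)) = G + ln ((s + 1) / s)"
    using s kpos by (simp add: G_def ln_mult ln_div)
  have IH: "e t \<le> A * s powr \<beta> * G" using Suc by (simp add: s_def G_def ks)
  have bern: "s powr \<beta> * (1 + \<beta> / s) \<le> (s + 1) powr \<beta>"
  proof -
    have "1 + \<beta> * (1 / s) \<le> (1 + 1 / s) powr \<beta>" using s b1 by (intro bernoulli_powr) auto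
    also have "(1 + 1 / s) = (s + 1) / s" using s by (simp add: field_simps)
    also have "((s + 1) / s) powr \<beta> = (s + 1) powr \<beta> / s powr \<beta>" using s by (simp add: powr_divide)
    finally show ?thesis using s by (simp add: field_simps)
  qed
  have key: "D \<le> A * (s powr \<beta> * (1 + \<beta> / s)) * ln ((s + 1) / s)"
  proof -
    have sb: "s powr \<beta> * (1 + \<beta> / s) = s powr (\<beta> - 1) * (s + \<beta>)"
      using s by (simp add: powr_diff field_simps)
    have m: "1 / real k \<le> s powr (\<beta> - 1)"
    proof (cases "s \<ge> 1")
      case True
      then have "1 \<le> s powr (\<beta> - 1)" using b1 by (intro ge_one_powr_ge_zero) auto
      moreover have "1 / real k \<le> 1" using k by simp
      ultimately show ?thesis by linarith
    next
      case False
      have "s powr 1 \<le> s powr (\<beta> - 1)" using s False b1 by (intro powr_mono') auto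
      moreover have "1 / real k \<le> s" using k by (simp add: s_def)
      ultimately show ?thesis using s by simp
    qed
    have "s powr (\<beta> - 1) * (s + \<beta>) * ln ((s + 1) / s) \<ge> s powr (\<beta> - 1) * (s + \<beta>) * (1 / (s + 1))"
      using ln_one_plus_ge[OF s] s b1 by (intro mult_left_mono) auto
    moreover have "s powr (\<beta> - 1) * (s + \<beta>) * (1 / (s + 1)) \<ge> s powr (\<beta> - 1)"
      using s b1 by (simp add: field_simps)
    ultimately have "s powr (\<beta> - 1) * (s + \<beta>) * ln ((s + 1) / s) \<ge> 1 / real k" using m by linarith
    then have "A * (s powr (\<beta> - 1) * (s + \<beta>) * ln ((s + 1) / s)) \<ge> A * (1 / real k)"
      using Apos by (intro mult_left_mono) auto
    moreover have "A * (1 / real k) \<ge> D" unfolding A_def using kpos D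
      by (simp add: field_simps power3_eq_cube)
    ultimately show ?thesis unfolding sb by (simp add: mult.assoc)
  qed
  have "e (Suc t) = (1 + \<beta> / s) * e t + D" using eS fac by simp
  also have "\<dots> \<le> (1 + \<beta> / s) * (A * s powr \<beta> * G) + D"
    using IH s b1 by (intro add_right_mono mult_left_mono) auto
  also have "\<dots> \<le> A * (s powr \<beta> * (1 + \<beta> / s)) * G + A * (s powr \<beta> * (1 + \<beta> / s)) * ln ((s + 1) / s)"
    using key by (simp add: algebra_simps)
  also have "\<dots> = A * (s powr \<beta> * (1 + \<beta> / s)) * (G + ln ((s + 1) / s))" by (rule distrib_left[symmetric])
  also have "\<dots> \<le> A * (s + 1) powr \<beta> * (G + ln ((s + 1) / s))"
  proof -
    have "G + ln ((s + 1) / s) \<ge> 0" using G0 ln_one_plus_ge[OF s] s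
      by (smt (verit) divide_pos_pos)
    then show ?thesis using bern Apos by (intro mult_right_mono mult_left_mono) auto
  qed
  also have "\<dots> = A * (real (Suc t) + 1 / real k) powr \<beta> * (1 + ln (real k * real (Suc t) + 1))"
    using G1 ks1 by (simp add: s_def add_ac)
  finally show ?case .
qed



lemma init_in_cliques:
  assumes "kinv k t E"
  shows "{0..<k} \<in> kcliques k (ktree_vertices k t) E"
proof -
  have "{x, y} \<in> E" if "x \<in> {0..<k}" "y \<in> {0..<k}" "x \<noteq> y" for x y
  proof -
    have "{x, y} \<in> initE k" using that unfolding initE_def by (intro CollectI exI[of _ x] exI[of _ y]) simp
    then show ?thesis using kinvD(2)[OF assms] by blast
  qed
  then show ?thesis unfolding kcliques_def ktree_vertices_def by auto
qed

lemma edge_in_clique_lt: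
  assumes inv: "kinv k t E" and k2: "k \<ge> 2" and e: "{a, b} \<in> E" and ab: "a < b"
  shows "\<exists>Q\<in>kcliques k (ktree_vertices k t) E. a \<in> Q \<and> b \<in> Q"
proof (cases "b < k")
  case True
  then show ?thesis using init_in_cliques[OF inv] ab by (intro bexI[of _ "{0..<k}"]) auto
next
  case False
  have bN: "b < k + t" using edge_lt[OF inv e] by simp
  have L: "card (lowN E b) = k" using kinvD(3)[OF inv, of b] False bN by simp
  have finL: "finite (lowN E b)" by (rule finite_subset[of _ "{..<b}"]) (auto simp: lowN_def)
  have a: "a \<in> lowN E b" using e ab by (simp add: lowN_def)
  have "card (lowN E b - {a}) = k - 1" using L a finL by (simp add: card_Diff_singleton)
  moreover have "k - 1 \<noteq> 0" using k2 by simp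
  ultimately have "lowN E b - {a} \<noteq> {}" by (metis card.empty)
  then obtain d where d: "d \<in> lowN E b" "d \<noteq> a" by blast
  define Q where "Q = insert b (lowN E b - {d})"
  have bL: "b \<notin> lowN E b" by (simp add: lowN_def)
  have "card Q = k" unfolding Q_def using bL finL d L k2 by (simp add: card_Diff_singleton)
  moreover have "Q \<subseteq> {0..<k+t}" unfolding Q_def using bN by (auto simp: lowN_def)
  moreover have "{x, y} \<in> E" if "x \<in> Q" "y \<in> Q" "x \<noteq> y" for x y
  proof (cases "x = b")
    case True
    then have "y \<in> lowN E b" using that Q_def by auto
    then show ?thesis using True by (simp add: lowN_def insert_commute)
  next
    case False
    show ?thesis
    proof (cases "y = b")
      case True
      then have "x \<in> lowN E b" using that Q_def False by auto
      then show ?thesis using True by (simp add: lowN_def)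
    next
      case False2: False
      then have "x \<in> lowN E b" "y \<in> lowN E b" using that Q_def False by auto
      moreover have "k \<le> b" using \<open>\<not> b < k\<close> by simp
      ultimately show ?thesis using kinvD(4)[OF inv, of b x y] that bN by blast
    qed
  qed
  ultimately have "Q \<in> kcliques k (ktree_vertices k t) E" unfolding kcliques_def ktree_vertices_def by auto
  moreover have "a \<in> Q" "b \<in> Q" using a d unfolding Q_def by auto
  ultimately show ?thesis by blast
qed

lemma edge_in_clique:
  assumes inv: "kinv k t E" and k2: "k \<ge> 2" and e: "{a, b} \<in> E"
  shows "\<exists>Q\<in>kcliques k (ktree_vertices k t) E. a \<in> Q \<and> b \<in> Q"
proof -
  have "a \<noteq> b" using edge_lt[OF inv e] by simp
  then consider "a < b" | "b < a" by linarith
  then show ?thesis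
  proof cases
    case 1 then show ?thesis using edge_in_clique_lt[OF inv k2 e] by blast
  next
    case 2
    have "{b, a} \<in> E" using e by (simp add: insert_commute)
    then show ?thesis using edge_in_clique_lt[OF inv k2 _ 2] by blast
  qed
qed

lemma deg_le_X:
  assumes inv: "kinv k t E" and k2: "k \<ge> 2"
  shows "degree (ktree_vertices k t) E w \<le> (k - 1) * Xc k t E w"
proof -
  let ?K = "{Q \<in> kcliques k (ktree_vertices k t) E. w \<in> Q}"
  have finK: "finite ?K" using kcliques_finite by simp
  have "{u \<in> ktree_vertices k t. {u, w} \<in> E} \<subseteq> (\<Union>Q\<in>?K. Q - {w})"
  proof
    fix u assume u: "u \<in> {u \<in> ktree_vertices k t. {u, w} \<in> E}"
    then have e: "{u, w} \<in> E" by simp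
    have "u \<noteq> w" using edge_lt[OF inv e] by simp
    then show "u \<in> (\<Union>Q\<in>?K. Q - {w})" using edge_in_clique[OF inv k2 e] by blast
  qed
  then have "degree (ktree_vertices k t) E w \<le> card (\<Union>Q\<in>?K. Q - {w})"
  proof -
    have "(\<Union>Q\<in>?K. Q - {w}) \<subseteq> {0..<k+t}" by (auto simp: kcliques_def ktree_vertices_def)
    then have "finite (\<Union>Q\<in>?K. Q - {w})" by (rule finite_subset) simp
    then show ?thesis unfolding degree_def using \<open>{u \<in> ktree_vertices k t. {u, w} \<in> E} \<subseteq> _\<close>
      by (rule card_mono)
  qed
  also have "\<dots> \<le> (\<Sum>Q\<in>?K. card (Q - {w}))" using finK by (rule card_UN_le)
  also have "\<dots> = (\<Sum>Q\<in>?K. k - 1)"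
  proof (rule sum.cong[OF refl])
    fix Q assume "Q \<in> ?K"
    then have Q: "card Q = k" "w \<in> Q" "Q \<subseteq> {0..<k+t}"
      by (auto simp: kcliques_def ktree_vertices_def)
    then have "finite Q" using finite_subset by blast
    then show "card (Q - {w}) = k - 1" using Q by (simp add: card_Diff_singleton)
  qed
  also have "\<dots> = (k - 1) * Xc k t E w" by (simp add: Xc_def)
  finally show ?thesis .
qed

lemma deg_out:
  assumes inv: "kinv k t E" and w: "\<not> w < k + t"
  shows "degree (ktree_vertices k t) E w = 0"
proof -
  have X: "{u \<in> ktree_vertices k t. {u, w} \<in> E} = {}"
  proof -
    have "{u, w} \<notin> E" for u using edge_lt(2)[OF inv, of u w] w by blast
    then show ?thesis by blast
  qed
  show ?thesis unfolding degree_def X by simp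
qed

lemma deg_from_Psi:
  assumes inv: "kinv k t E" and k2: "k \<ge> 2" and M: "M \<ge> 0"
    and P: "Psi k t E \<le> (M / real k) ^ 2"
  shows "real (degree (ktree_vertices k t) E w) \<le> M"
proof (cases "w < k + t")
  case False then show ?thesis using deg_out[OF inv False] M by simp
next
  case True
  have "real (Xc k t E w) ^ 2 \<le> Psi k t E"
    unfolding Psi_def using True by (intro member_le_sum) auto
  then have "real (Xc k t E w) ^ 2 \<le> (M / real k) ^ 2" using P by (rule order_trans)
  then have X: "real (Xc k t E w) \<le> M / real k"
  proof (rule power2_le_imp_le)
    show "0 \<le> M / real k" using M by simp
  qed
  have "real (degree (ktree_vertices k t) E w) \<le> real ((k - 1) * Xc k t E w)"
    using deg_le_X[OF inv k2] by (simp only: of_nat_le_iff)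
  also have "\<dots> = (real k - 1) * real (Xc k t E w)" using k2 by (simp add: of_nat_diff)
  also have "\<dots> \<le> (real k - 1) * (M / real k)" using X k2 by (intro mult_left_mono) auto
  also have "\<dots> = M - M / real k" using k2 by (simp add: field_simps)
  also have "\<dots> \<le> M" using M by simp
  finally show ?thesis .
qed



lemma vexp_bound:
  assumes inv: "kinv k t E" and k2: "k \<ge> 2" and tk: "t \<ge> k" and t4: "t \<ge> 4"
  shows "vertex_expansion (ktree_vertices k t) E \<le> 8 * real k / real t"
proof -
  let ?V = "ktree_vertices k t"
  have c1: "\<And>x. k \<le> x \<Longrightarrow> x < k + t \<Longrightarrow> (1::real) \<le> real (k + t) / 4" using t4 by simp
  have c2: "real (k + t) / 2 \<le> (\<Sum>y\<in>{k..<k + t}. (1::real))" using tk by simp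
  obtain S B where S: "S \<subseteq> {k..<k+t}" "real (k+t) / 4 \<le> (\<Sum>y\<in>S. (1::real))"
      "(\<Sum>y\<in>S. (1::real)) \<le> real (k+t) / 2" "finite B" "card B \<le> k + 1"
      "\<forall>y\<in>S. \<forall>z. z \<notin> S \<longrightarrow> {y, z} \<in> E \<longrightarrow> z \<in> B"
    using centroid[OF inv k2 refl, of "\<lambda>_. 1" "real (k + t)"] c1 c2 by auto
  have finS: "finite S" using S(1) finite_subset by blast
  have cS: "real (k+t) / 4 \<le> real (card S)" "real (card S) \<le> real (k+t) / 2" using S(2,3) by simp_all
  have cSpos: "0 < card S"
  proof (rule ccontr)
    assume "\<not> 0 < card S"
    then have "real (card S) = 0" by simp
    then show False using cS(1) t4 by simp
  qed
  have bd: "boundary ?V E S \<subseteq> B" using S(6) by (auto simp: boundary_def)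
  have cb: "card (boundary ?V E S) \<le> k + 1" using card_mono[OF S(4) bd] S(5) by simp
  let ?set = "{real (card (boundary ?V E S')) / real (card S') | S'.
            S' \<subseteq> ?V \<and> 0 < card S' \<and> real (card S') \<le> real (card ?V) / 2}"
  have mem: "real (card (boundary ?V E S)) / real (card S) \<in> ?set"
  proof -
    have "S \<subseteq> ?V" using S(1) by (auto simp: ktree_vertices_def)
    moreover have "real (card S) \<le> real (card ?V) / 2" using cS(2) by (simp add: ktree_vertices_def)
    ultimately show ?thesis using cSpos by blast
  qed
  have fin: "finite ?set"
  proof -
    have "?set \<subseteq> (\<lambda>S'. real (card (boundary ?V E S')) / real (card S')) ` Pow ?V" by auto
    then show ?thesis by (rule finite_subset) (simp add: ktree_vertices_def)
  qed
  have "vertex_expansion ?V E \<le> real (card (boundary ?V E S)) / real (card S)"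
    unfolding vertex_expansion_def using fin mem by (rule Min_le)
  also have "\<dots> \<le> real (k + 1) / real (card S)"
    using cb cSpos by (intro divide_right_mono) auto
  also have "\<dots> \<le> real (k + 1) / (real (k + t) / 4)"
    using cS(1) t4 by (intro divide_left_mono) auto
  also have "\<dots> = 4 * real (k + 1) / real (k + t)" by simp
  also have "\<dots> \<le> 4 * real (k + 1) / real t"
    using t4 by (intro divide_left_mono) auto
  also have "\<dots> \<le> 8 * real k / real t"
    using t4 k2 by (intro divide_right_mono) auto
  finally show ?thesis .
qed

lemma cond_bound:
  assumes inv: "kinv k t E" and k2: "k \<ge> 2" and t1: "t \<ge> 1" and M0: "0 \<le> M"
    and Mt: "M \<le> real t / 2"
    and deg: "\<And>w. real (degree (ktree_vertices k t) E w) \<le> M"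
  shows "conductance (ktree_vertices k t) E \<le> 6 * M / real t"
proof -
  let ?V = "ktree_vertices k t"
  define D where "D = (\<lambda>x. real (degree ?V E x))"
  define W where "W = (\<Sum>v\<in>{0..<k+t}. D v)"
  have Wvol: "W = real (vol ?V E ?V)" by (simp add: W_def D_def vol_def ktree_vertices_def)
  have split: "W = (\<Sum>v\<in>{0..<k}. D v) + (\<Sum>v\<in>{k..<k+t}. D v)"
    unfolding W_def by (rule sum.atLeastLessThan_concat[symmetric]) auto
  have degk: "real k \<le> D v" if "k \<le> v" "v < k + t" for v
  proof -
    have "lowN E v \<subseteq> {u \<in> ?V. {u, v} \<in> E}" using that by (auto simp: lowN_def ktree_vertices_def)
    then have "card (lowN E v) \<le> degree ?V E v" unfolding degree_def
      by (intro card_mono) (auto simp: ktree_vertices_def)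
    then show ?thesis using kinvD(3)[OF inv that] by (simp add: D_def)
  qed
  have hi: "real k * real t \<le> (\<Sum>v\<in>{k..<k+t}. D v)"
  proof -
    have "(\<Sum>v\<in>{k..<k+t}. real k) \<le> (\<Sum>v\<in>{k..<k+t}. D v)" using degk by (intro sum_mono) auto
    then show ?thesis by (simp add: mult.commute)
  qed
  have lo0: "0 \<le> (\<Sum>v\<in>{0..<k}. D v)" by (simp add: D_def sum_nonneg)
  have lo: "(\<Sum>v\<in>{0..<k}. D v) \<le> real k * M"
  proof -
    have "(\<Sum>v\<in>{0..<k}. D v) \<le> (\<Sum>v\<in>{0..<k}. M)" using deg by (intro sum_mono) (simp add: D_def)
    then show ?thesis by simp
  qed
  have kM: "real k * M \<le> real k * real t / 2" using Mt k2 by (simp add: mult_left_mono)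
  have Wge: "real k * real t \<le> W" using split hi lo0 by linarith
  have tot: "W / 2 \<le> (\<Sum>v\<in>{k..<k+t}. D v)" using split lo kM Wge by linarith
  have fW: "D x \<le> W / 4" for x
  proof -
    have "2 * real t \<le> real k * real t" using k2 by (intro mult_right_mono) auto
    then have "real t * 2 \<le> real k * real t" by (simp add: mult.commute)
    then have "real t / 2 \<le> real k * real t / 4" by simp
    then show ?thesis using deg[of x] Mt Wge unfolding D_def by linarith
  qed
  have "0 \<le> real k * real t" by simp
  then have W0: "0 \<le> W" using Wge by linarith
  obtain S B where S: "S \<subseteq> {k..<k+t}" "W / 4 \<le> (\<Sum>y\<in>S. D y)"
      "(\<Sum>y\<in>S. D y) \<le> W / 2" "finite B" "card B \<le> k + 1"
      "\<forall>y\<in>S. \<forall>z. z \<notin> S \<longrightarrow> {y, z} \<in> E \<longrightarrow> z \<in> B"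
    using centroid[OF inv k2 refl, of D W] fW tot W0 by (auto simp: D_def)
  have volS: "real (vol ?V E S) = (\<Sum>y\<in>S. D y)" by (simp add: vol_def D_def)
  have ktpos: "0 < real k * real t" using k2 t1 by simp
  have vS: "real k * real t / 4 \<le> real (vol ?V E S)" using volS S(2) Wge by linarith
  have vSpos: "0 < vol ?V E S" using vS ktpos by (cases "vol ?V E S") auto
  have SV: "S \<subseteq> ?V" using S(1) by (auto simp: ktree_vertices_def)
  let ?cut = "{e \<in> E. \<exists>u\<in>S. \<exists>w\<in>?V - S. e = {u, w}}"
  let ?U = "\<Union>b\<in>B. (\<lambda>u. {u, b}) ` {u \<in> ?V. {u, b} \<in> E}"
  have cutsub: "?cut \<subseteq> ?U"
  proof
    fix e assume "e \<in> ?cut"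
    then obtain u w where uw: "e \<in> E" "u \<in> S" "w \<in> ?V - S" "e = {u, w}" by blast
    have "w \<in> B" using S(6) uw by blast
    moreover have "u \<in> {u \<in> ?V. {u, w} \<in> E}" using uw SV by auto
    ultimately show "e \<in> ?U" using uw by blast
  qed
  have finU: "finite ?U" using S(4) by (auto simp: ktree_vertices_def)
  have "cut_edges ?V E S \<le> card ?U" unfolding cut_edges_def using finU cutsub by (rule card_mono)
  also have "\<dots> \<le> (\<Sum>b\<in>B. card ((\<lambda>u. {u, b}) ` {u \<in> ?V. {u, b} \<in> E}))"
    using S(4) by (rule card_UN_le)
  also have "\<dots> \<le> (\<Sum>b\<in>B. degree ?V E b)"
    unfolding degree_def by (intro sum_mono card_image_le) (simp add: ktree_vertices_def)
  finally have cut1: "real (cut_edges ?V E S) \<le> (\<Sum>b\<in>B. D b)"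
    unfolding D_def by (metis of_nat_le_iff of_nat_sum)
  also have "\<dots> \<le> (\<Sum>b\<in>B. M)" using deg by (intro sum_mono) (simp add: D_def)
  also have "\<dots> = real (card B) * M" by simp
  also have "\<dots> \<le> real (k + 1) * M" using S(5) M0 by (intro mult_right_mono) auto
  finally have cutM: "real (cut_edges ?V E S) \<le> real (k + 1) * M" .
  let ?set = "{real (cut_edges ?V E S') / real (vol ?V E S') | S'.
            S' \<subseteq> ?V \<and> 0 < vol ?V E S' \<and> real (vol ?V E S') \<le> real (vol ?V E ?V) / 2}"
  have mem: "real (cut_edges ?V E S) / real (vol ?V E S) \<in> ?set"
  proof -
    have "real (vol ?V E S) \<le> real (vol ?V E ?V) / 2" using S(3) volS Wvol by simp
    then show ?thesis using SV vSpos by blast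
  qed
  have fin: "finite ?set"
  proof -
    have "?set \<subseteq> (\<lambda>S'. real (cut_edges ?V E S') / real (vol ?V E S')) ` Pow ?V" by auto
    then show ?thesis by (rule finite_subset) (simp add: ktree_vertices_def)
  qed
  have "conductance ?V E \<le> real (cut_edges ?V E S) / real (vol ?V E S)"
    unfolding conductance_def using fin mem by (rule Min_le)
  also have "\<dots> \<le> real (k + 1) * M / real (vol ?V E S)"
    using cutM vSpos by (intro divide_right_mono) auto
  also have "\<dots> \<le> real (k + 1) * M / (real k * real t / 4)"
    using vS ktpos M0 by (intro divide_left_mono) auto
  also have "\<dots> \<le> 6 * M / real t"
  proof -
    have "real (k + 1) * M / (real k * real t / 4) = (4 * (real k + 1) / real k) * (M / real t)"
      using k2 t1 by (simp add: field_simps)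
    also have "\<dots> \<le> 6 * (M / real t)"
      using k2 M0 t1 by (intro mult_right_mono) (auto simp: field_simps)
    finally show ?thesis by simp
  qed
  finally show ?thesis .
qed



lemma Psi_nonneg: "0 \<le> Psi k t E" by (simp add: Psi_def sum_nonneg)

lemma expect_bound:
  assumes k2: "k \<ge> 2"
  shows "measure_pmf.expectation (random_ktree k n) (Psi k n) \<le>
     (real k ^ 3 + real k * Dk k) * (real n + 1 / real k) powr (2 - 2 / real k) * (1 + ln (real k * real n + 1))"
proof -
  have k1: "k \<ge> 1" using k2 by simp
  have D: "Dk k \<ge> 0" by (simp add: Dk_def)
  show ?thesis
    using seq_bound[of k "Dk k" "\<lambda>n. measure_pmf.expectation (random_ktree k n) (Psi k n)", OF k2 D]
      expect_Psi_0[of k] expect_Psi_Suc[OF k1] by simp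
qed

lemma ratio_bound:
  assumes k2: "k \<ge> 2" and n3: "n \<ge> 3"
  defines "A0 \<equiv> real k ^ 3 + real k * Dk k"
  shows "measure_pmf.expectation (random_ktree k n) (Psi k n) /
           ((ln (real n) * real n powr (1 - 1 / real k)) / real k) ^ 2
         \<le> 4 * A0 * real k ^ 2 * (1 + ln (2 * real k) + ln (real n)) / (ln (real n)) ^ 2"
proof -
  define \<beta> where "\<beta> = 2 - 2 / real k"
  have b: "0 \<le> \<beta>" "\<beta> \<le> 2" using k2 by (auto simp: \<beta>_def field_simps)
  have A0: "0 \<le> A0" by (simp add: A0_def Dk_def)
  have npos: "real n > 0" using n3 by simp
  have lnpos: "ln (real n) > 0" using n3 by simp
  have kpos: "real k > 0" using k2 by simp
  have e: "measure_pmf.expectation (random_ktree k n) (Psi k n) \<le>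
     A0 * (real n + 1 / real k) powr \<beta> * (1 + ln (real k * real n + 1))"
    using expect_bound[OF k2, of n] by (simp add: A0_def \<beta>_def)
  have p1: "(real n + 1 / real k) powr \<beta> \<le> 4 * real n powr \<beta>"
  proof -
    have "1 / real k \<le> 1" using k2 by simp
    moreover have "1 \<le> real n" using n3 by simp
    ultimately have "1 / real k \<le> real n" by linarith
    then have "(real n + 1 / real k) powr \<beta> \<le> (2 * real n) powr \<beta>"
      using b kpos by (intro powr_mono2) auto
    also have "\<dots> = 2 powr \<beta> * real n powr \<beta>" using npos by (simp add: powr_mult)
    also have "2 powr \<beta> \<le> 2 powr 2" using b by (intro powr_mono) auto
    then have "2 powr \<beta> * real n powr \<beta> \<le> 4 * real n powr \<beta>" by (intro mult_right_mono) auto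
    finally show ?thesis .
  qed
  have p2: "1 + ln (real k * real n + 1) \<le> 1 + ln (2 * real k) + ln (real n)"
  proof -
    have "1 \<le> real k" "1 \<le> real n" using k2 n3 by simp_all
    then have "1 * 1 \<le> real k * real n" by (intro mult_mono) auto
    then have "real k * real n + 1 \<le> (2 * real k) * real n" by simp
    then have "ln (real k * real n + 1) \<le> ln ((2 * real k) * real n)" using kpos npos by simp
    also have "\<dots> = ln (2 * real k) + ln (real n)" using kpos npos by (simp add: ln_mult)
    finally show ?thesis by simp
  qed
  have l0: "0 \<le> 1 + ln (real k * real n + 1)" using kpos npos by simp
  have eb: "measure_pmf.expectation (random_ktree k n) (Psi k n) \<le> A0 * (4 * real n powr \<beta>) * (1 + ln (2 * real k) + ln (real n))"
  proof -
    have "A0 * (real n + 1 / real k) powr \<beta> * (1 + ln (real k * real n + 1))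
        \<le> A0 * (4 * real n powr \<beta>) * (1 + ln (real k * real n + 1))"
      using p1 A0 l0 by (intro mult_right_mono mult_left_mono) auto
    also have "\<dots> \<le> A0 * (4 * real n powr \<beta>) * (1 + ln (2 * real k) + ln (real n))"
      using p2 A0 by (intro mult_left_mono) auto
    finally show ?thesis using e by linarith
  qed
  moreover have a: "((ln (real n) * real n powr (1 - 1 / real k)) / real k) ^ 2 = (ln (real n))^2 * real n powr \<beta> / (real k)^2"
  proof -
    have "(real n powr (1 - 1 / real k)) ^ 2 = real n powr \<beta>"
      using npos by (simp add: powr_realpow[symmetric] powr_powr \<beta>_def algebra_simps)
    then show ?thesis by (simp add: power_divide power_mult_distrib)
  qed
  moreover have apos: "0 < (ln (real n))^2 * real n powr \<beta> / (real k)^2" using lnpos npos kpos by simp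
  ultimately have "measure_pmf.expectation (random_ktree k n) (Psi k n) /
           ((ln (real n) * real n powr (1 - 1 / real k)) / real k) ^ 2
      \<le> A0 * (4 * real n powr \<beta>) * (1 + ln (2 * real k) + ln (real n)) / ((ln (real n))^2 * real n powr \<beta> / (real k)^2)"
    unfolding a using divide_right_mono[OF eb, of "(ln (real n))^2 * real n powr \<beta> / (real k)^2"] apos by simp
  also have "\<dots> = 4 * A0 * real k ^ 2 * (1 + ln (2 * real k) + ln (real n)) / (ln (real n)) ^ 2"
    using npos kpos lnpos by (simp add: field_simps)
  finally show ?thesis .
qed



theorem proposition6:
  fixes k :: nat
  assumes "k \<ge> 2"
  shows "(\<exists>C::real. \<forall>\<^sub>F n in sequentially. \<forall>E \<in> set_pmf (random_ktree k n).
            vertex_expansion (ktree_vertices k n) E \<le> C * real k / real n)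
       \<and> (\<exists>C::real. (\<lambda>n. measure_pmf.prob (random_ktree k n)
            {E. conductance (ktree_vertices k n) E \<le> C * ln (real n) * real n powr (- 1 / real k)})
            \<longlonglongrightarrow> 1)"
proof
  have k2: "k \<ge> 2" using assms .
  have k1: "k \<ge> 1" using k2 by simp
  show "\<exists>C::real. \<forall>\<^sub>F n in sequentially. \<forall>E \<in> set_pmf (random_ktree k n).
            vertex_expansion (ktree_vertices k n) E \<le> C * real k / real n"
  proof (intro exI[of _ 8])
    show "\<forall>\<^sub>F n in sequentially. \<forall>E \<in> set_pmf (random_ktree k n).
            vertex_expansion (ktree_vertices k n) E \<le> 8 * real k / real n"
      unfolding eventually_sequentially
    proof (intro exI[of _ "k + 4"] allI impI ballI)
      fix n E assume n: "k + 4 \<le> n" and E: "E \<in> set_pmf (random_ktree k n)"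
      show "vertex_expansion (ktree_vertices k n) E \<le> 8 * real k / real n"
        using vexp_bound[OF support_kinv[OF k1 E] k2] n by simp
    qed
  qed
  define A0 where "A0 = real k ^ 3 + real k * Dk k"
  define c1 where "c1 = 1 + ln (2 * real k)"
  define g where "g = (\<lambda>n::nat. 4 * A0 * real k ^ 2 * (c1 + ln (real n)) / (ln (real n)) ^ 2)"
  define M where "M = (\<lambda>n::nat. ln (real n) * real n powr (1 - 1 / real k))"
  define p where "p = (\<lambda>n. measure_pmf.prob (random_ktree k n)
            {E. conductance (ktree_vertices k n) E \<le> 6 * ln (real n) * real n powr (- 1 / real k)})"
  have kpos: "real k > 0" using k2 by simp
  have lninf: "filterlim (\<lambda>n::nat. ln (real n)) at_top sequentially"
    by (rule filterlim_compose[OF ln_at_top filterlim_real_sequentially])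
  have inv0: "(\<lambda>n::nat. inverse (ln (real n))) \<longlonglongrightarrow> 0"
    by (rule tendsto_inverse_0_at_top[OF lninf])
  have lim_g: "g \<longlonglongrightarrow> 0"
  proof -
    have "(\<lambda>n. 4 * A0 * real k ^ 2 * (c1 * (inverse (ln (real n)))^2 + inverse (ln (real n))))
            \<longlonglongrightarrow> 4 * A0 * real k ^ 2 * (c1 * 0^2 + 0)"
      by (intro tendsto_intros inv0)
    then have l: "(\<lambda>n. 4 * A0 * real k ^ 2 * (c1 * (inverse (ln (real n)))^2 + inverse (ln (real n))))
            \<longlonglongrightarrow> 0" by simp
    have ev: "\<forall>\<^sub>F n in sequentially. 4 * A0 * real k ^ 2 * (c1 * (inverse (ln (real n)))^2 + inverse (ln (real n))) = g n"
      unfolding eventually_sequentially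
    proof (intro exI[of _ 2] allI impI)
      fix n :: nat assume "2 \<le> n"
      then have "ln (real n) > 0" by simp
      then show "4 * A0 * real k ^ 2 * (c1 * (inverse (ln (real n)))^2 + inverse (ln (real n))) = g n"
        unfolding g_def by (simp add: field_simps power2_eq_square)
    qed
    show ?thesis using Lim_transform_eventually[OF l ev] .
  qed
  have Mn: "M n / real n = ln (real n) / real n powr (1 / real k)" if "n > 0" for n
  proof -
    have e1: "1 - 1 / real k = 1 + (- (1 / real k))" by simp
    have "real n powr (1 - 1 / real k) = real n powr 1 * real n powr (- (1 / real k))"
      unfolding e1 by (rule powr_add)
    also have "\<dots> = real n / real n powr (1 / real k)" using that by (simp add: powr_minus_divide)
    finally show ?thesis using that unfolding M_def by simp
  qed
  have Mn2: "6 * M n / real n = 6 * ln (real n) * real n powr (- 1 / real k)" if "n > 0" for n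
  proof -
    have "real n powr (- 1 / real k) = 1 / real n powr (1 / real k)"
      by (simp add: powr_minus_divide[symmetric])
    moreover have "6 * M n / real n = 6 * (M n / real n)" by simp
    ultimately show ?thesis using Mn[OF that] by simp
  qed
  have ev_M: "\<forall>\<^sub>F n in sequentially. M n / real n < 1 / 2"
  proof -
    have "(\<lambda>n. ln (real n) / real n powr (1 / real k)) \<longlonglongrightarrow> 0"
      using kpos by (intro lim_ln_over_power) simp
    then have "\<forall>\<^sub>F n in sequentially. ln (real n) / real n powr (1 / real k) < 1 / 2"
      by (rule order_tendstoD) simp
    moreover have "\<forall>\<^sub>F n in sequentially. n > (0::nat)" by (simp add: eventually_gt_at_top)
    ultimately show ?thesis by eventually_elim (simp add: Mn)
  qed
  have lower: "\<forall>\<^sub>F n in sequentially. 1 - g n \<le> p n"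
  proof -
    have "\<forall>\<^sub>F n in sequentially. n \<ge> (3::nat)" by (simp add: eventually_ge_at_top)
    with ev_M show ?thesis
    proof eventually_elim
      case (elim n)
      have n3: "n \<ge> 3" using elim by simp
      have npos: "real n > 0" using n3 by simp
      have lnpos: "ln (real n) > 0" using n3 by simp
      have M0: "0 \<le> M n" unfolding M_def using lnpos by simp
      have Mt: "M n \<le> real n / 2" using elim npos by (simp add: field_simps)
      let ?P = "random_ktree k n"
      define a where "a = (M n / real k) ^ 2"
      have apos: "a > 0" unfolding a_def M_def using lnpos npos kpos by simp
      have fin: "finite (set_pmf ?P)" by (rule support_finite[OF k1])
      have intg: "integrable (measure_pmf ?P) (Psi k n)" by (rule integrable_measure_pmf_finite[OF fin])
      have markov: "measure_pmf.prob ?P {x \<in> space (measure_pmf ?P). a \<le> Psi k n x}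
           \<le> measure_pmf.expectation ?P (Psi k n) / a"
        by (rule integral_Markov_inequality_measure[OF intg _ _ apos]) (auto simp: Psi_nonneg)
      have rb: "measure_pmf.expectation ?P (Psi k n) / a \<le> g n"
        using ratio_bound[OF k2 n3] unfolding a_def M_def g_def A0_def c1_def by (simp add: add.assoc)
      have bad: "measure_pmf.prob ?P {x. a \<le> Psi k n x} \<le> g n" using markov rb by simp
      have compl: "measure_pmf.prob ?P {x. Psi k n x < a} = 1 - measure_pmf.prob ?P {x. a \<le> Psi k n x}"
      proof -
        have "{x. Psi k n x < a} = space (measure_pmf ?P) - {x. a \<le> Psi k n x}" by auto
        moreover have "measure_pmf.prob ?P (space (measure_pmf ?P) - {x. a \<le> Psi k n x}) = 1 - measure_pmf.prob ?P {x. a \<le> Psi k n x}"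
          by (rule measure_pmf.prob_compl) simp
        ultimately show ?thesis by simp
      qed
      have sub: "{x. Psi k n x < a} \<inter> set_pmf ?P \<subseteq>
            {E. conductance (ktree_vertices k n) E \<le> 6 * ln (real n) * real n powr (- 1 / real k)}"
      proof
        fix E assume E: "E \<in> {x. Psi k n x < a} \<inter> set_pmf ?P"
        have inv: "kinv k n E" using support_kinv[OF k1] E by blast
        have "Psi k n E \<le> (M n / real k) ^ 2" using E unfolding a_def by simp
        then have degs: "\<And>w. real (degree (ktree_vertices k n) E w) \<le> M n"
          using deg_from_Psi[OF inv k2 M0] by blast
        have "conductance (ktree_vertices k n) E \<le> 6 * M n / real n"
          using cond_bound[OF inv k2 _ M0 Mt degs] n3 by simp
        then show "E \<in> {E. conductance (ktree_vertices k n) E \<le> 6 * ln (real n) * real n powr (- 1 / real k)}"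
          using Mn2[of n] n3 by simp
      qed
      have "measure_pmf.prob ?P {x. Psi k n x < a} = measure_pmf.prob ?P ({x. Psi k n x < a} \<inter> set_pmf ?P)"
        by (simp add: measure_Int_set_pmf)
      also have "\<dots> \<le> p n" unfolding p_def
        by (rule measure_pmf.finite_measure_mono[OF sub]) simp
      finally show "1 - g n \<le> p n" using compl bad by simp
    qed
  qed
  have upper: "\<forall>\<^sub>F n in sequentially. p n \<le> 1"
    unfolding p_def by (simp add: measure_pmf.prob_le_1)
  have "(\<lambda>n. 1 - g n) \<longlonglongrightarrow> 1 - 0" by (intro tendsto_intros lim_g)
  then have "p \<longlonglongrightarrow> 1" using tendsto_sandwich[OF lower upper] by simp
  then show "\<exists>C::real. (\<lambda>n. measure_pmf.prob (random_ktree k n)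
            {E. conductance (ktree_vertices k n) E \<le> C * ln (real n) * real n powr (- 1 / real k)})
            \<longlonglongrightarrow> 1"
    unfolding p_def by (intro exI[of _ 6])
qed



end
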